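(* Let $G$ be a finitely generated group and fix $S\in\Gamma_n(G)$. Let $\alpha>1$ be a constant and $(k_i)_{i\ge1}$ a log-dense sequence. Suppose that for each $i\ge1$ there is a path $\gamma$ in $\Gamma_n(G)$ of length at most $\alpha k_i$ which starts at $S$ and visits some vertices $S_1,\dots,S_{k_i}\in\Gamma_n(G)$ in that order, and that there is a cubic $k_i$-tuple $(g_1,\dots,g_{k_i})$ with $g_j$ an entry of $S_j$ for each $1\le j\le k_i$. Then $\Gamma_m(G,S)$ has exponential growth for every $m\ge n+1$.
   Context: For a group $G$, a generating $n$-tuple is $(g_1,\dots,g_n)\in G^n$ generating $G$. The product replacement graph $\Gamma_n(G)$ has vertices the generating $n$-tuples, with edges from $(g_1,\dots,g_n)$ to each tuple obtained by replacing $g_j$ by $g_jg_i^{\pm1}$ or $g_i^{\pm1}g_j$, for every ordered pair $i\neq j$. For $S=(g_1,\dots,g_n)$ and $m\ge n$, $\Gamma_m(G,S)$ is the connected component of $\Gamma_m(G)$ containing $(g_1,\dots,g_n,1,\dots,1)$ ($m-n$ identity entries). A connected graph has exponential growth if for some vertex $v$ there is $\alpha>1$ such that the number of vertices at distance at most $r$ from $v$ is at least $\alpha^r$ for all sufficiently large $r$. A sequence of positive integers $(k_i)$ is log-dense if it is increasing and $k_{i+1}\le\beta k_i$ for some constant $\beta$ and all $i$. A tuple $(g_1,\dots,g_k)\in G^k$ is cubic if the set $\{g_1^{\varepsilon_1}g_2^{\varepsilon_2}\cdots g_k^{\varepsilon_k}:\varepsilon_j\in\{0,1\}\}$ has exactly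 $2^k$ elements. *)

theory Defs
  imports Complex_Main "HOL-Algebra.Generated_Groups"
begin

definition fin_gen_group :: "('a, 'b) monoid_scheme \<Rightarrow> bool" where
  "fin_gen_group G \<longleftrightarrow> group G \<and>
     (\<exists>A. finite A \<and> A \<subseteq> carrier G \<and> generate G A = carrier G)"

text \<open>Vertices of the product replacement graph: generating n-tuples.\<close>
definition gen_tuples :: "('a, 'b) monoid_scheme \<Rightarrow> nat \<Rightarrow> 'a list set" where
  "gen_tuples G n = {xs. length xs = n \<and> set xs \<subseteq> carrier G \<and> generate G (set xs) = carrier G}"

definition prr_step :: "('a, 'b) monoid_scheme \<Rightarrow> 'a list \<Rightarrow> 'a list \<Rightarrow> bool" where
  "prr_step G xs ys \<longleftrightarrow> (\<exists>i j. i < length xs \<and> j < length xs \<and> i \<noteq> j \<and>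
     (ys = xs[j := xs!j \<otimes>\<^bsub>G\<^esub> xs!i] \<or>
      ys = xs[j := xs!j \<otimes>\<^bsub>G\<^esub> inv\<^bsub>G\<^esub> (xs!i)] \<or>
      ys = xs[j := xs!i \<otimes>\<^bsub>G\<^esub> xs!j] \<or>
      ys = xs[j := inv\<^bsub>G\<^esub> (xs!i) \<otimes>\<^bsub>G\<^esub> xs!j]))"

text \<open>A path (walk) in \<Gamma>_n(G), given as its nonempty list of vertices;
  its length is the number of edges, i.e. length p - 1.\<close>
definition prr_walk :: "('a, 'b) monoid_scheme \<Rightarrow> nat \<Rightarrow> 'a list list \<Rightarrow> bool" where
  "prr_walk G n p \<longleftrightarrow> p \<noteq> [] \<and> set p \<subseteq> gen_tuples G n \<and>
     (\<forall>t. t + 1 < length p \<longrightarrow> prr_step G (p!t) (p!(t+1)))"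

definition prr_component :: "('a, 'b) monoid_scheme \<Rightarrow> nat \<Rightarrow> 'a list \<Rightarrow> 'a list set" where
  "prr_component G m v = {w. \<exists>p. prr_walk G m p \<and> hd p = v \<and> last p = w}"

definition prr_ball :: "('a, 'b) monoid_scheme \<Rightarrow> nat \<Rightarrow> 'a list \<Rightarrow> nat \<Rightarrow> 'a list set" where
  "prr_ball G m v r = {w. \<exists>p. prr_walk G m p \<and> hd p = v \<and> last p = w \<and> length p - 1 \<le> r}"

definition prr_graph_S :: "('a, 'b) monoid_scheme \<Rightarrow> nat \<Rightarrow> 'a list \<Rightarrow> 'a list set" where
  "prr_graph_S G m S = prr_component G m (S @ replicate (m - length S) \<one>\<^bsub>G\<^esub>)"

definition exp_growth :: "('a, 'b) monoid_scheme \<Rightarrow> nat \<Rightarrow> 'a list set \<Rightarrow> bool" where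
  "exp_growth G m C \<longleftrightarrow> (\<exists>v\<in>C. \<exists>a::real. a > 1 \<and>
      (\<forall>\<^sub>F r in sequentially. a ^ r \<le> real (card (prr_ball G m v r))))"

definition log_dense :: "(nat \<Rightarrow> nat) \<Rightarrow> bool" where
  "log_dense k \<longleftrightarrow> (\<forall>i. k i > 0) \<and> strict_mono k \<and> (\<exists>\<beta>::real. \<forall>i. real (k (Suc i)) \<le> \<beta> * real (k i))"

fun subprod :: "('a, 'b) monoid_scheme \<Rightarrow> 'a list \<Rightarrow> bool list \<Rightarrow> 'a" where
  "subprod G (g # gs) (e # es) = (if e then g else \<one>\<^bsub>G\<^esub>) \<otimes>\<^bsub>G\<^esub> subprod G gs es"
| "subprod G _ _ = \<one>\<^bsub>G\<^esub>"

definition cubic :: "('a, 'b) monoid_scheme \<Rightarrow> 'a list \<Rightarrow> bool" where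
  "cubic G gs \<longleftrightarrow> card {subprod G gs es | es. length es = length gs} = 2 ^ length gs"

end

theory Submission
  imports Defs
begin



lemma ball_refl: "v \<in> gen_tuples G m \<Longrightarrow> v \<in> prr_ball G m v 0"
  unfolding prr_ball_def prr_walk_def by (rule CollectI, rule exI[of _ "[v]"]) auto

lemma ball_mono: "d \<le> d' \<Longrightarrow> prr_ball G m v d \<subseteq> prr_ball G m v d'"
  unfolding prr_ball_def by auto

lemma ball_step:
  assumes "w \<in> prr_ball G m v d" "prr_step G w w'" "w' \<in> gen_tuples G m"
  shows "w' \<in> prr_ball G m v (Suc d)"
proof -
  obtain p where p: "prr_walk G m p" "hd p = v" "last p = w" "length p - 1 \<le> d"
    using assms(1) unfolding prr_ball_def by auto
  have "prr_walk G m (p @ [w'])"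
    unfolding prr_walk_def
  proof (intro conjI allI impI)
    show "p @ [w'] \<noteq> []" by simp
    show "set (p @ [w']) \<subseteq> gen_tuples G m" using p(1) assms(3) unfolding prr_walk_def by auto
    fix t assume t: "t + 1 < length (p @ [w'])"
    show "prr_step G ((p @ [w']) ! t) ((p @ [w']) ! (t + 1))"
    proof (cases "t + 1 < length p")
      case True
      then show ?thesis using p(1) unfolding prr_walk_def by (auto simp: nth_append)
    next
      case False
      then have "t = length p - 1" using t by simp
      moreover have "p ! (length p - 1) = w" using p(1,3) unfolding prr_walk_def
        by (simp add: last_conv_nth)
      ultimately show ?thesis using assms(2) False p(1) unfolding prr_walk_def
        by (auto simp: nth_append)
    qed
  qed
  moreover have "hd (p @ [w']) = v" using p(1,2) unfolding prr_walk_def by simp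
  ultimately show ?thesis unfolding prr_ball_def using p(4)
    by (intro CollectI exI[of _ "p @ [w']"]) auto
qed

lemma ball_cases:
  assumes "w \<in> prr_ball G m v (Suc d)"
  shows "w \<in> prr_ball G m v d \<or> (\<exists>u \<in> prr_ball G m v d. prr_step G u w)"
proof -
  obtain p where p: "prr_walk G m p" "hd p = v" "last p = w" "length p - 1 \<le> Suc d"
    using assms(1) unfolding prr_ball_def by auto
  show ?thesis
  proof (cases "length p - 1 \<le> d")
    case True then show ?thesis using p unfolding prr_ball_def by auto
  next
    case False
    then have L: "length p = d + 2" using p(4) by simp
    define q where "q = butlast p"
    have lq: "length q = d + 1" using L q_def by simp
    have wq: "prr_walk G m q" unfolding prr_walk_def
    proof (intro conjI allI impI)
      show "q \<noteq> []" using lq by auto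
      show "set q \<subseteq> gen_tuples G m" using p(1) unfolding prr_walk_def q_def
        by (meson in_set_butlastD subset_iff)
      fix t assume "t + 1 < length q"
      then show "prr_step G (q ! t) (q ! (t + 1))" using p(1) unfolding prr_walk_def q_def
        by (simp add: nth_butlast)
    qed
    have hq: "hd q = v" using p(2) lq L unfolding q_def
      by (simp add: hd_conv_nth nth_butlast flip: length_greater_0_conv)
    have "q \<noteq> []" using lq by auto
    then have lastq: "last q = p ! d" using lq unfolding q_def
      by (simp add: last_conv_nth nth_butlast)
    have "prr_step G (p ! d) (p ! (d+1))" using p(1) L unfolding prr_walk_def by auto
    moreover have "p ! (d+1) = w"
    proof -
      have "p \<noteq> []" using L by auto
      then have "last p = p ! (length p - 1)" by (rule last_conv_nth)
      then show ?thesis using p(3) L by simp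
    qed
    moreover have "last q \<in> prr_ball G m v d" unfolding prr_ball_def using wq hq lq by auto
    ultimately show ?thesis using lastq by auto
  qed
qed

lemma finite_steps: "finite {w'. prr_step G w w'}"
proof -
  have "{w'. prr_step G w w'} \<subseteq> (\<Union>i<length w. \<Union>j<length w.
     {w[j := w!j \<otimes>\<^bsub>G\<^esub> w!i], w[j := w!j \<otimes>\<^bsub>G\<^esub> inv\<^bsub>G\<^esub> (w!i)],
      w[j := w!i \<otimes>\<^bsub>G\<^esub> w!j], w[j := inv\<^bsub>G\<^esub> (w!i) \<otimes>\<^bsub>G\<^esub> w!j]})"
  proof
    fix y assume "y \<in> {w'. prr_step G w w'}"
    then obtain i j where ij: "i < length w" "j < length w"
      "y = w[j := w!j \<otimes>\<^bsub>G\<^esub> w!i] \<or> y = w[j := w!j \<otimes>\<^bsub>G\<^esub> inv\<^bsub>G\<^esub> (w!i)] \<or>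
      y = w[j := w!i \<otimes>\<^bsub>G\<^esub> w!j] \<or> y = w[j := inv\<^bsub>G\<^esub> (w!i) \<otimes>\<^bsub>G\<^esub> w!j]"
      unfolding prr_step_def mem_Collect_eq by blast
    then show "y \<in> (\<Union>i<length w. \<Union>j<length w.
     {w[j := w!j \<otimes>\<^bsub>G\<^esub> w!i], w[j := w!j \<otimes>\<^bsub>G\<^esub> inv\<^bsub>G\<^esub> (w!i)],
      w[j := w!i \<otimes>\<^bsub>G\<^esub> w!j], w[j := inv\<^bsub>G\<^esub> (w!i) \<otimes>\<^bsub>G\<^esub> w!j]})"
      using ij by - (rule UN_I[where a=i], simp, rule UN_I[where a=j], simp, blast)
  qed
  then show ?thesis by (rule finite_subset) simp
qed

lemma finite_ball: "finite (prr_ball G m v r)"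
proof (induction r)
  case 0
  have "prr_ball G m v 0 \<subseteq> {v}"
  proof
    fix w assume "w \<in> prr_ball G m v 0"
    then obtain p where p0: "prr_walk G m p" "hd p = v" "last p = w" "length p - 1 \<le> 0"
      unfolding prr_ball_def by auto
    then have p: "p \<noteq> []" "hd p = v" "last p = w" "length p - 1 \<le> 0"
      unfolding prr_walk_def by simp_all
    then have "length p = 1" by (cases p) simp_all
    then have "p = [hd p]" by (cases p) simp_all
    then have "w = v" using p(2,3) by (metis last.simps)
    then show "w \<in> {v}" by simp
  qed
  then show ?case by (rule finite_subset) simp
next
  case (Suc r)
  have "prr_ball G m v (Suc r) \<subseteq> prr_ball G m v r \<union> (\<Union>u\<in>prr_ball G m v r. {w'. prr_step G u w'})"
  proof
    fix w assume "w \<in> prr_ball G m v (Suc r)"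
    from ball_cases[OF this]
    show "w \<in> prr_ball G m v r \<union> (\<Union>u\<in>prr_ball G m v r. {w'. prr_step G u w'})"
      by blast
  qed
  moreover have "finite (prr_ball G m v r \<union> (\<Union>u\<in>prr_ball G m v r. {w'. prr_step G u w'}))"
    by (rule finite_UnI[OF Suc.IH finite_UN_I[OF Suc.IH finite_steps]])
  ultimately show ?case by (rule finite_subset)
qed




definition ext :: "('a, 'b) monoid_scheme \<Rightarrow> nat \<Rightarrow> nat \<Rightarrow> 'a list \<Rightarrow> 'a \<Rightarrow> 'a list" where
  "ext G m n xs x = xs @ x # replicate (m - Suc n) \<one>\<^bsub>G\<^esub>"

lemma gen_superset:
  assumes "group G" "generate G A = carrier G" "A \<subseteq> B" "B \<subseteq> carrier G"
  shows "generate G B = carrier G"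
  using group.mono_generate[OF assms(1) assms(3)] group.generate_incl[OF assms(1) assms(4)] assms(2)
  by blast

lemma ext_gen:
  assumes "group G" "xs \<in> gen_tuples G n" "x \<in> carrier G" "n < m"
  shows "ext G m n xs x \<in> gen_tuples G m"
proof -
  have sx: "set xs \<subseteq> carrier G" "generate G (set xs) = carrier G" "length xs = n"
    using assms(2) unfolding gen_tuples_def by auto
  have "set (ext G m n xs x) \<subseteq> carrier G" unfolding ext_def
    using sx assms(1,3) by (auto dest: monoid.one_closed[OF group.is_monoid])
  moreover have "set xs \<subseteq> set (ext G m n xs x)" unfolding ext_def by auto
  moreover have "length (ext G m n xs x) = m" unfolding ext_def using sx assms(4) by simp
  ultimately show ?thesis unfolding gen_tuples_def using gen_superset[OF assms(1) sx(2)] by auto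
qed

lemma ext_step:
  assumes "prr_step G xs ys" "length xs = n"
  shows "prr_step G (ext G m n xs x) (ext G m n ys x)"
proof -
  obtain i j where ij: "i < length xs" "j < length xs" "i \<noteq> j"
    "ys = xs[j := xs!j \<otimes>\<^bsub>G\<^esub> xs!i] \<or> ys = xs[j := xs!j \<otimes>\<^bsub>G\<^esub> inv\<^bsub>G\<^esub> (xs!i)] \<or>
      ys = xs[j := xs!i \<otimes>\<^bsub>G\<^esub> xs!j] \<or> ys = xs[j := inv\<^bsub>G\<^esub> (xs!i) \<otimes>\<^bsub>G\<^esub> xs!j]"
    using assms(1) unfolding prr_step_def by blast
  let ?E = "ext G m n xs x"
  have e: "?E ! i = xs ! i" "?E ! j = xs ! j" using ij unfolding ext_def by (simp_all add: nth_append)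
  have u: "\<And>c. ext G m n (xs[j := c]) x = ?E[j := c]" using ij unfolding ext_def
    by (simp add: list_update_append)
  have l: "i < length ?E" "j < length ?E" using ij unfolding ext_def by simp_all
  show ?thesis unfolding prr_step_def
    apply (rule exI[of _ i], rule exI[of _ j])
    using ij l e u by auto
qed

lemma ext_mult:
  assumes "i < n" "length xs = n" "n < m"
  shows "prr_step G (ext G m n xs x) (ext G m n xs (x \<otimes>\<^bsub>G\<^esub> xs!i))"
proof -
  let ?E = "ext G m n xs x"
  have e: "?E ! i = xs ! i" "?E ! n = x" using assms unfolding ext_def by (simp_all add: nth_append)
  have u: "ext G m n xs (x \<otimes>\<^bsub>G\<^esub> xs!i) = ?E[n := x \<otimes>\<^bsub>G\<^esub> xs!i]" using assms unfolding ext_def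
    by (simp add: list_update_append)
  have l: "i < length ?E" "n < length ?E" using assms unfolding ext_def by simp_all
  show ?thesis unfolding prr_step_def
    apply (rule exI[of _ i], rule exI[of _ n])
    using assms l e u by auto
qed

lemma subprod_closed: "group G \<Longrightarrow> set gs \<subseteq> carrier G \<Longrightarrow> subprod G gs es \<in> carrier G"
  by (induction G gs es rule: subprod.induct) (auto intro: monoid.m_closed[OF group.is_monoid] monoid.one_closed[OF group.is_monoid])

lemma subprod_snoc:
  assumes "group G" "length es = length gs" "set gs \<subseteq> carrier G" "g \<in> carrier G"
  shows "subprod G (gs @ [g]) (es @ [e]) = subprod G gs es \<otimes>\<^bsub>G\<^esub> (if e then g else \<one>\<^bsub>G\<^esub>)"
  using assms(2,3)
proof (induction gs arbitrary: es)
  case Nil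
  then show ?case using assms(1,4) by (simp add: monoid.r_one monoid.l_one group.is_monoid)
next
  case (Cons a gs)
  then obtain e' es' where es: "es = e' # es'" by (cases es) auto
  have a: "a \<in> carrier G" "set gs \<subseteq> carrier G" using Cons.prems by auto
  have IH: "subprod G (gs @ [g]) (es' @ [e]) = subprod G gs es' \<otimes>\<^bsub>G\<^esub> (if e then g else \<one>\<^bsub>G\<^esub>)"
    using Cons es by auto
  have c1: "(if e' then a else \<one>\<^bsub>G\<^esub>) \<in> carrier G" using a assms(1) by (simp add: group.is_monoid monoid.one_closed)
  have c2: "(if e then g else \<one>\<^bsub>G\<^esub>) \<in> carrier G" using assms(1,4) by (simp add: group.is_monoid monoid.one_closed)
  have c3: "subprod G gs es' \<in> carrier G" using subprod_closed[OF assms(1) a(2)] .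
  show ?case using IH es c1 c2 c3 assms(1) by (simp add: group.is_monoid monoid.m_assoc)
qed




lemma walk_len: "prr_walk G n p \<Longrightarrow> t < length p \<Longrightarrow> p ! t \<in> gen_tuples G n"
  unfolding prr_walk_def by (meson nth_mem subsetD)

lemma walk_along:
  assumes "prr_walk G n p" "group G" "x \<in> carrier G" "n < m" "t \<le> t'" "t' < length p"
    "ext G m n (p!t) x \<in> prr_ball G m v d"
  shows "ext G m n (p!t') x \<in> prr_ball G m v (d + (t' - t))"
  using assms(5,6)
proof (induction t')
  case 0
  then show ?case using assms(7) by simp
next
  case (Suc t')
  show ?case
  proof (cases "t = Suc t'")
    case True
    then show ?thesis using assms(7) by simp
  next
    case False
    then have tt: "t \<le> t'" "t' < length p" using Suc.prems by auto
    have IH: "ext G m n (p!t') x \<in> prr_ball G m v (d + (t' - t))" using Suc.IH tt by blast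
    have st: "prr_step G (p!t') (p!(t'+1))" using assms(1) Suc.prems unfolding prr_walk_def by auto
    have ln: "length (p!t') = n" using walk_len[OF assms(1) tt(2)] unfolding gen_tuples_def by auto
    have g: "ext G m n (p!(Suc t')) x \<in> gen_tuples G m"
      using ext_gen[OF assms(2) walk_len[OF assms(1) Suc.prems(2)] assms(3,4)] .
    have "ext G m n (p!(Suc t')) x \<in> prr_ball G m v (Suc (d + (t' - t)))"
      using ball_step[OF IH ext_step[OF st ln] ] g by simp
    moreover have "Suc (d + (t' - t)) = d + (Suc t' - t)" using tt by simp
    ultimately show ?thesis by metis
  qed
qed

lemma main_reach:
  assumes grp: "group G" and pw: "prr_walk G n p" and hp: "hd p = S" and nm: "n < m"
    and lts: "length ts = k" and sts: "sorted ts" and tsp: "\<forall>j<k. ts!j < length p"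
    and lgs: "length gs = k" and gsin: "\<forall>j<k. gs!j \<in> set (p!(ts!j))"
  shows "j \<le> k \<Longrightarrow> length es = j \<Longrightarrow>
    ext G m n (p ! (if j = 0 then 0 else ts!(j-1))) (subprod G (take j gs) es)
      \<in> prr_ball G m (ext G m n S \<one>\<^bsub>G\<^esub>) ((if j = 0 then 0 else ts!(j-1)) + j)"
proof (induction j arbitrary: es)
  case 0
  have p0: "p ! 0 = S" using pw hp unfolding prr_walk_def by (simp add: hd_conv_nth)
  have "S \<in> gen_tuples G n" using pw hp walk_len[of G n p 0] p0 unfolding prr_walk_def by auto
  then have "ext G m n S \<one>\<^bsub>G\<^esub> \<in> gen_tuples G m"
    using ext_gen[OF grp _ _ nm] grp by (simp add: group.is_monoid monoid.one_closed)
  then show ?case using 0 p0 ball_refl by simp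
next
  case (Suc j)
  let ?tp = "if j = 0 then 0 else ts!(j-1)"
  have jk: "j < k" using Suc.prems by simp
  obtain es' e where es: "es = es' @ [e]" using Suc.prems(2)
    by (metis length_Suc_conv_rev)
  have les': "length es' = j" using es Suc.prems(2) by simp
  have gscar: "set gs \<subseteq> carrier G"
  proof
    fix g assume "g \<in> set gs"
    then obtain l where l: "l < k" "g = gs ! l" using lgs by (auto simp: in_set_conv_nth)
    have "p!(ts!l) \<in> gen_tuples G n" using walk_len[OF pw] tsp l by auto
    then show "g \<in> carrier G" using gsin l unfolding gen_tuples_def by auto
  qed
  define x where "x = subprod G (take j gs) es'"
  have xc: "x \<in> carrier G" unfolding x_def using subprod_closed[OF grp] gscar
    by (meson in_set_takeD subset_iff)
  have IH: "ext G m n (p ! ?tp) x \<in> prr_ball G m (ext G m n S \<one>\<^bsub>G\<^esub>) (?tp + j)"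
    using Suc.IH[of es'] jk les' unfolding x_def by simp
  have tple: "?tp \<le> ts!j" using sts jk lts by (auto intro: sorted_nth_mono)
  have A: "ext G m n (p ! (ts!j)) x \<in> prr_ball G m (ext G m n S \<one>\<^bsub>G\<^esub>) (ts!j + j)"
    using walk_along[OF pw grp xc nm tple _ IH] tsp jk tple by (simp add: add.commute)
  have gj: "gs!j \<in> carrier G" using gscar jk lgs by auto
  have take: "take (Suc j) gs = take j gs @ [gs!j]" using jk lgs by (simp add: take_Suc_conv_app_nth)
  have sp: "subprod G (take (Suc j) gs) es = x \<otimes>\<^bsub>G\<^esub> (if e then gs!j else \<one>\<^bsub>G\<^esub>)"
    unfolding take es x_def
    by (rule subprod_snoc[OF grp _ _ gj]) (use les' jk lgs gscar in \<open>auto dest: in_set_takeD\<close>)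
  have gtn: "p!(ts!j) \<in> gen_tuples G n" using walk_len[OF pw] tsp jk by auto
  then have lpn: "length (p!(ts!j)) = n" unfolding gen_tuples_def by auto
  obtain i where i: "i < n" "p!(ts!j)!i = gs!j" using gsin jk lpn by (metis in_set_conv_nth)
  show ?case
  proof (cases e)
    case True
    have "ext G m n (p ! (ts!j)) (x \<otimes>\<^bsub>G\<^esub> gs!j) \<in> prr_ball G m (ext G m n S \<one>\<^bsub>G\<^esub>) (Suc (ts!j + j))"
      using ball_step[OF A ext_mult[OF i(1) lpn nm]] i(2) ext_gen[OF grp gtn _ nm] xc gj grp
      by (simp add: group.is_monoid monoid.m_closed)
    then show ?thesis using sp True by simp
  next
    case False
    have "x \<otimes>\<^bsub>G\<^esub> \<one>\<^bsub>G\<^esub> = x" using xc grp by (simp add: group.is_monoid monoid.r_one)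
    then show ?thesis using sp False A ball_mono[of "ts!j + j" "Suc (ts!j + j)"] by auto
  qed
qed




lemma card_bound:
  assumes grp: "group G" and pw: "prr_walk G n p" and hp: "hd p = S" and nm: "n < m"
    and lts: "length ts = k" and sts: "sorted ts" and tsp: "\<forall>j<k. ts!j < length p"
    and lgs: "length gs = k" and gsin: "\<forall>j<k. gs!j \<in> set (p!(ts!j))"
    and cub: "cubic G gs" and lp: "real (length p - 1) \<le> \<alpha> * real k"
    and r: "(\<alpha> + 1) * real k \<le> real r"
  shows "2^k \<le> card (prr_ball G m (ext G m n S \<one>\<^bsub>G\<^esub>) r)"
proof -
  define tp where "tp = (if k = 0 then 0 else ts!(k-1))"
  have tpl: "tp < length p" using tsp pw unfolding tp_def prr_walk_def by auto
  have "real (tp + k) \<le> real (length p - 1) + real k" using tpl by simp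
  also have "\<dots> \<le> r" using lp r by (simp add: algebra_simps)
  finally have rad: "tp + k \<le> r" by simp
  define Y where "Y = ext G m n (p ! tp) ` {subprod G gs es | es. length es = length gs}"
  have "Y \<subseteq> prr_ball G m (ext G m n S \<one>\<^bsub>G\<^esub>) r"
  proof
    fix y assume "y \<in> Y"
    then obtain es where es: "length es = k" "y = ext G m n (p ! tp) (subprod G gs es)"
      unfolding Y_def using lgs by auto
    have "y \<in> prr_ball G m (ext G m n S \<one>\<^bsub>G\<^esub>) (tp + k)"
      using main_reach[OF grp pw hp nm lts sts tsp lgs gsin, of k es] es lgs unfolding tp_def by simp
    then show "y \<in> prr_ball G m (ext G m n S \<one>\<^bsub>G\<^esub>) r" using ball_mono[OF rad] by blast
  qed
  then have "card Y \<le> card (prr_ball G m (ext G m n S \<one>\<^bsub>G\<^esub>) r)"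
    by (rule card_mono[OF finite_ball])
  moreover have "card Y = 2^k"
  proof -
    have ln: "length (p ! tp) = n" using walk_len[OF pw tpl] unfolding gen_tuples_def by simp
    have "inj (ext G m n (p ! tp))"
    proof (rule injI)
      fix a b assume "ext G m n (p ! tp) a = ext G m n (p ! tp) b"
      then have "ext G m n (p ! tp) a ! n = ext G m n (p ! tp) b ! n" by simp
      then show "a = b" using ln unfolding ext_def by (simp add: nth_append)
    qed
    then show ?thesis unfolding Y_def using cub lgs unfolding cubic_def
      by (simp add: card_image inj_on_subset[OF _ subset_UNIV])
  qed
  ultimately show ?thesis by simp
qed




theorem lemma3p10:
  fixes G :: "('a, 'b) monoid_scheme" and n :: nat and S :: "'a list"
    and \<alpha> :: real and k :: "nat \<Rightarrow> nat"
  assumes "fin_gen_group G"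
    and "S \<in> gen_tuples G n"
    and "\<alpha> > 1"
    and "log_dense k"
    and "\<forall>i. \<exists>p ts gs. prr_walk G n p \<and> hd p = S \<and> real (length p - 1) \<le> \<alpha> * real (k i)
            \<and> length ts = k i \<and> sorted ts \<and> (\<forall>j < k i. ts!j < length p)
            \<and> length gs = k i \<and> cubic G gs
            \<and> (\<forall>j < k i. gs!j \<in> set (p!(ts!j)))"
  shows "\<forall>m \<ge> n + 1. exp_growth G m (prr_graph_S G m S)"
proof (intro allI impI)
  fix m assume mn: "m \<ge> n + 1"
  then have nm: "n < m" by simp
  have grp: "group G" using assms(1) unfolding fin_gen_group_def by simp
  obtain \<beta> :: real where beta: "\<And>i. real (k (Suc i)) \<le> \<beta> * real (k i)"
    using assms(4) unfolding log_dense_def by blast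
  have kpos: "\<And>i. k i > 0" and smk: "strict_mono k" using assms(4) unfolding log_dense_def by auto
  have bpos: "\<beta> > 0"
  proof (rule ccontr)
    assume "\<not> \<beta> > 0"
    then have "\<beta> * real (k 0) \<le> 0" using kpos by (simp add: mult_nonpos_nonneg)
    then show False using beta[of 0] kpos[of 1] by simp
  qed
  have lS: "length S = n" using assms(2) unfolding gen_tuples_def by simp
  define v where "v = ext G m n S \<one>\<^bsub>G\<^esub>"
  have vS: "S @ replicate (m - length S) \<one>\<^bsub>G\<^esub> = v"
    unfolding v_def ext_def lS using nm by (simp add: replicate_Suc[symmetric] Suc_diff_Suc)
  have vg: "v \<in> gen_tuples G m" unfolding v_def
    using ext_gen[OF grp assms(2) _ nm] grp by (simp add: group.is_monoid monoid.one_closed)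
  have vin: "v \<in> prr_graph_S G m S"
    unfolding prr_graph_S_def prr_component_def vS prr_walk_def
    using vg by (intro CollectI exI[of _ "[v]"]) auto
  define c where "c = \<alpha> + 1"
  have cpos: "c > 1" using assms(3) c_def by simp
  define a where "a = (2::real) powr (1 / (c * \<beta>))"
  have a1: "a > 1" unfolding a_def using cpos bpos by simp
  have ev: "\<forall>\<^sub>F r in sequentially. a ^ r \<le> real (card (prr_ball G m v r))"
    unfolding eventually_sequentially
  proof (intro exI[of _ "nat \<lceil>c * real (k 0)\<rceil>"] allI impI)
    fix r assume rN: "nat \<lceil>c * real (k 0)\<rceil> \<le> r"
    then have r0: "c * real (k 0) \<le> real r" by linarith
    define P where "P i \<longleftrightarrow> real r < c * real (k i)" for i
    have "r + 1 \<le> k (r + 1)" using smk by (simp add: seq_suble)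
    then have k1: "real r + 1 \<le> real (k (r+1))" by (metis of_nat_1 of_nat_add of_nat_le_iff)
    have "0 \<le> (c - 1) * real (k (r+1))" using cpos by simp
    then have "real (k (r+1)) \<le> c * real (k (r+1))" by (simp add: left_diff_distrib)
    then have "P (r + 1)" unfolding P_def using k1 by linarith
    define i0 where "i0 = (LEAST i. P i)"
    have Pi0: "P i0" unfolding i0_def by (rule LeastI[of P, OF \<open>P (r+1)\<close>])
    have "i0 \<noteq> 0"
    proof
      assume "i0 = 0" then show False using Pi0 r0 unfolding P_def by simp
    qed
    then obtain i where i: "i0 = Suc i" by (cases i0) auto
    have nPi: "\<not> P i" using not_less_Least[of i P] i unfolding i0_def by simp
    have ci: "c * real (k i) \<le> real r" using nPi unfolding P_def by simp
    have rlt: "real r < c * real (k (Suc i))" using Pi0 i unfolding P_def by simp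
    obtain p ts gs where H: "prr_walk G n p" "hd p = S" "real (length p - 1) \<le> \<alpha> * real (k i)"
      "length ts = k i" "sorted ts" "\<forall>j < k i. ts!j < length p"
      "length gs = k i" "cubic G gs" "\<forall>j < k i. gs!j \<in> set (p!(ts!j))"
      using assms(5) by blast
    have cardb: "2^(k i) \<le> card (prr_ball G m v r)"
      unfolding v_def using card_bound[OF grp H(1,2) nm H(4,5,6,7,9,8,3)] ci c_def by simp
    have "real r \<le> c * \<beta> * real (k i)"
    proof -
      have "c * real (k (Suc i)) \<le> c * (\<beta> * real (k i))"
        using beta[of i] cpos by (intro mult_left_mono) auto
      then show ?thesis using rlt by (simp add: mult.assoc)
    qed
    then have le: "real r * (1 / (c * \<beta>)) \<le> real (k i)"
      using cpos bpos by (simp add: field_simps)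
    have "a ^ r = 2 powr (real r * (1 / (c * \<beta>)))" unfolding a_def by (simp add: powr_power)
    also have "\<dots> \<le> 2 powr (real (k i))" using le by (intro powr_mono) auto
    also have "\<dots> = 2 ^ (k i)" by (simp add: powr_realpow)
    also have "\<dots> \<le> real (card (prr_ball G m v r))" using cardb
      by (metis of_nat_le_iff of_nat_numeral of_nat_power)
    finally show "a ^ r \<le> real (card (prr_ball G m v r))" .
  qed
  show "exp_growth G m (prr_graph_S G m S)"
    unfolding exp_growth_def using vin a1 ev by blast
qed


end
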